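(* There exists a constant $c>0$ such that for all even $n>2$ and all odd $d>1$, the set $\mathrm{Zer}_1(d,n)=\{A\in\Omega_1(d,n):\operatorname{Per}(A)=0\}$ has dimension at least $cn^{3/2}$; that is, there is a set $V$ of vertices of $\Omega_1(d,n)$ whose convex hull is contained in $\mathrm{Zer}_1(d,n)$ and has affine dimension at least $cn^{3/2}$.
   Context: Let $I_n=\{1,\dots,n\}$. A $d$-dimensional matrix of order $n$ is a function $I_n^d\to\mathbb R$. A line is the set of positions obtained by varying one coordinate and fixing the others. A diagonal is a selection of $n$ positions any two of which differ in every coordinate; $\operatorname{Per}(A)$ is the sum over diagonals of the product of the entries on the diagonal. $\Omega_1(d,n)$ is the convex polytope of non-negative $d$-dimensional matrices of order $n$ whose entries in each line sum to $1$. The dimension of $\mathrm{Zer}_1(d,n)$ is the maximum dimension of a polytope $\mathrm{Hull}(V)$, $V$ a set of vertices of $\Omega_1(d,n)$, with $\mathrm{Hull}(V)\subseteq\mathrm{Zer}_1(d,n)$. *)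

theory Defs
  imports "HOL-Analysis.Analysis"
begin

text \<open>Index tuples are lists of length d with entries in {0..<n} (0-based version of I_n).
  Matrices are represented as functions on all of nat list, required to vanish
  outside the index set, so they form exactly the space of real functions on I_n^d.\<close>

type_synonym mat = "nat list \<Rightarrow> real"

definition positions :: "nat \<Rightarrow> nat \<Rightarrow> nat list set" where
  "positions d n = {p. length p = d \<and> set p \<subseteq> {..<n}}"

definition diagonals :: "nat \<Rightarrow> nat \<Rightarrow> nat list set set" where
  "diagonals d n = {D. D \<subseteq> positions d n \<and> card D = n \<and>
      (\<forall>p\<in>D. \<forall>q\<in>D. p \<noteq> q \<longrightarrow> (\<forall>k<d. p ! k \<noteq> q ! k))}"

definition per :: "nat \<Rightarrow> nat \<Rightarrow> mat \<Rightarrow> real" where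
  "per d n A = (\<Sum>D\<in>diagonals d n. \<Prod>p\<in>D. A p)"

definition Omega1 :: "nat \<Rightarrow> nat \<Rightarrow> mat set" where
  "Omega1 d n = {A. (\<forall>p. p \<notin> positions d n \<longrightarrow> A p = 0)
      \<and> (\<forall>p\<in>positions d n. 0 \<le> A p)
      \<and> (\<forall>p\<in>positions d n. \<forall>k<d. (\<Sum>j<n. A (p[k := j])) = 1)}"

definition Zer1 :: "nat \<Rightarrow> nat \<Rightarrow> mat set" where
  "Zer1 d n = {A \<in> Omega1 d n. per d n A = 0}"

definition vertices :: "nat \<Rightarrow> nat \<Rightarrow> mat set" where
  "vertices d n = {A \<in> Omega1 d n. \<forall>B\<in>Omega1 d n. \<forall>C\<in>Omega1 d n. \<forall>t::real.
      0 < t \<and> t < 1 \<and> A = (\<lambda>p. t * B p + (1 - t) * C p) \<longrightarrow> B = C}"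

definition mat_hull :: "mat set \<Rightarrow> mat set" where
  "mat_hull V = {A. \<exists>S w. finite S \<and> S \<subseteq> V \<and> (\<forall>x\<in>S. 0 \<le> w x) \<and> sum w S = 1
      \<and> A = (\<lambda>p. \<Sum>x\<in>S. w x * x p)}"

definition aff_indep :: "mat set \<Rightarrow> bool" where
  "aff_indep S \<longleftrightarrow> (\<forall>u. sum u S = 0 \<and> (\<lambda>p. \<Sum>x\<in>S. u x * x p) = (\<lambda>_. 0)
      \<longrightarrow> (\<forall>x\<in>S. u x = 0))"

definition aff_dim_ge :: "mat set \<Rightarrow> real \<Rightarrow> bool" where
  "aff_dim_ge X m \<longleftrightarrow> (\<exists>S. S \<subseteq> X \<and> finite S \<and> aff_indep S \<and> real (card S) \<ge> m + 1)"

end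

theory Submission
  imports Defs
begin

definition msup :: "nat \<Rightarrow> nat \<Rightarrow> (nat \<Rightarrow> nat \<Rightarrow> int) \<Rightarrow> mat" where
  "msup d n \<sigma> p = (if p \<in> positions d n \<and> int (sum_list (drop 2 p)) mod int n = \<sigma> (p!0) (p!1) mod int n then 1 else 0)"

definition latin :: "nat \<Rightarrow> (nat \<Rightarrow> nat \<Rightarrow> int) \<Rightarrow> bool" where
  "latin n \<sigma> \<longleftrightarrow> (\<forall>j<n. inj_on (\<lambda>i. \<sigma> i j mod int n) {..<n}) \<and> (\<forall>i<n. inj_on (\<lambda>j. \<sigma> i j mod int n) {..<n})"

lemma sum_ex1:
  fixes n :: nat
  assumes "\<exists>!j. j < n \<and> P j"
  shows "(\<Sum>j<n. if P j then 1 else 0 :: real) = 1"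
proof -
  from assms obtain j0 where j0: "j0 < n \<and> P j0" by blast
  have u: "\<And>j. j<n \<Longrightarrow> P j \<Longrightarrow> j = j0" using assms j0 by blast
  have e: "{..<n} \<inter> {j. P j} = {j0}" using j0 u by blast
  have "(\<Sum>j<n. if P j then 1 else 0 :: real) = (\<Sum>j\<in>{..<n} \<inter> {j. P j}. 1)"
    by (subst sum.inter_restrict) simp_all
  then show ?thesis using e by simp
qed

lemma mod_nat_eq:
  assumes "x < n" "y < n" "(a + int x) mod int n = (a + int y) mod int n"
  shows "x = y"
proof -
  have "((a + int x) - a) mod int n = ((a + int y) - a) mod int n"
    using assms(3) by (metis mod_diff_cong)
  then have "int x mod int n = int y mod int n" by simp
  then show ?thesis using assms(1,2) by simp
qed

lemma inj_mod_ex1: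
  assumes "n > 0" "inj_on (\<lambda>i. f i mod int n) {..<n}"
  shows "\<exists>!i. i < n \<and> f i mod int n = r mod int n"
proof -
  let ?g = "\<lambda>i. f i mod int n"
  have sub: "?g ` {..<n} \<subseteq> {0..<int n}" using assms(1) by auto
  have c: "card (?g ` {..<n}) = card {0..<int n}"
    using card_image[OF assms(2)] by simp
  have eq: "?g ` {..<n} = {0..<int n}"
    by (rule card_subset_eq[OF _ sub c]) simp
  have "r mod int n \<in> {0..<int n}" using assms(1) by simp
  then obtain i where "i < n" "f i mod int n = r mod int n" using eq
    by (metis (no_types, lifting) imageE lessThan_iff)
  moreover have "\<And>i'. i' < n \<Longrightarrow> f i' mod int n = r mod int n \<Longrightarrow> i' = i"
    using assms(2) calculation by (metis inj_onD lessThan_iff)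
  ultimately show ?thesis by blast
qed

lemma shift_ex1:
  assumes "n > 0"
  shows "\<exists>!j. j < n \<and> (C + int j) mod int n = s mod int n"
proof -
  define j where "j = nat ((s - C) mod int n)"
  have j: "int j = (s - C) mod int n" using assms by (simp add: j_def)
  have "int j < int n" unfolding j using assms by simp
  then have "j < n" by simp
  moreover have "(C + int j) mod int n = (C + (s - C)) mod int n" unfolding j by (rule mod_add_right_eq)
  then have jj: "(C + int j) mod int n = s mod int n" by simp
  moreover have "\<And>j'. j' < n \<Longrightarrow> (C + int j') mod int n = s mod int n \<Longrightarrow> j' = j"
  proof -
    fix j' assume "j' < n" "(C + int j') mod int n = s mod int n"
    then show "j' = j" using mod_nat_eq[of j' n j C] jj \<open>j < n\<close> by simp
  qed
  ultimately show ?thesis by blast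
qed

lemma sum_list_upd_int:
  "i < length xs \<Longrightarrow> int (sum_list (xs[i:=j])) = int (sum_list xs) - int (xs!i) + int j"
proof (induction xs arbitrary: i)
  case Nil then show ?case by simp
next
  case (Cons a xs) then show ?case by (cases i) auto
qed

lemma upd_positions:
  "p \<in> positions d n \<Longrightarrow> j < n \<Longrightarrow> p[k:=j] \<in> positions d n"
  unfolding positions_def by (auto dest: subsetD[OF set_update_subset_insert])

lemma line_sum:
  assumes lat: "latin n \<sigma>" and n: "n > 0" and d: "d \<ge> 2"
    and p: "p \<in> positions d n" and k: "k < d"
  shows "(\<Sum>j<n. msup d n \<sigma> (p[k:=j])) = 1"
proof -
  have lp: "length p = d" and sp: "set p \<subseteq> {..<n}" using p by (auto simp: positions_def)
  have p0: "p!0 < n" using sp lp d by (metis lessThan_iff nth_mem order.strict_trans2 pos2 subsetD)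
  have p1: "p!1 < n" using sp lp d by (metis Suc_1 Suc_le_lessD lessThan_iff nth_mem subsetD)
  let ?Q = "\<lambda>j. int (sum_list (drop 2 (p[k:=j]))) mod int n = \<sigma> ((p[k:=j])!0) ((p[k:=j])!1) mod int n"
  have "(\<Sum>j<n. msup d n \<sigma> (p[k:=j])) = (\<Sum>j<n. if ?Q j then 1 else 0)"
    by (rule sum.cong) (auto simp: msup_def upd_positions[OF p])
  also have "\<dots> = 1"
  proof (rule sum_ex1)
    show "\<exists>!j. j < n \<and> ?Q j"
    proof (cases "k = 0")
      case True
      then have "\<And>j. ?Q j = (\<sigma> j (p!1) mod int n = int (sum_list (drop 2 p)) mod int n)"
        using lp d by auto
      then show ?thesis using inj_mod_ex1[OF n] lat p1 unfolding latin_def by simp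
    next
      case k0: False
      show ?thesis
      proof (cases "k = 1")
        case True
        then have "\<And>j. ?Q j = (\<sigma> (p!0) j mod int n = int (sum_list (drop 2 p)) mod int n)"
          using lp d by auto
        then show ?thesis using inj_mod_ex1[OF n] lat p0 unfolding latin_def by simp
      next
        case False
        then have k2: "k \<ge> 2" using k0 by simp
        have "\<And>j. drop 2 (p[k:=j]) = (drop 2 p)[k-2:=j]" using k2 by (simp add: drop_update_swap)
        moreover have "k - 2 < length (drop 2 p)" using k lp k2 by simp
        ultimately have "\<And>j. int (sum_list (drop 2 (p[k:=j]))) = (int (sum_list (drop 2 p)) - int ((drop 2 p)!(k-2))) + int j"
          using sum_list_upd_int by simp
        moreover have "\<And>j. (p[k:=j])!0 = p!0" "\<And>j. (p[k:=j])!1 = p!1" using k2 by auto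
        ultimately have "\<And>j. ?Q j = ((int (sum_list (drop 2 p)) - int ((drop 2 p)!(k-2)) + int j) mod int n = \<sigma> (p!0) (p!1) mod int n)"
          by simp
        then show ?thesis using shift_ex1[OF n] by simp
      qed
    qed
  qed
  finally show ?thesis .
qed

lemma msup_Omega1:
  assumes "latin n \<sigma>" "n > 0" "d \<ge> 2"
  shows "msup d n \<sigma> \<in> Omega1 d n"
  unfolding Omega1_def
proof (intro CollectI conjI ballI allI impI)
  fix p assume "p \<notin> positions d n" then show "msup d n \<sigma> p = 0" by (simp add: msup_def)
next
  fix p show "0 \<le> msup d n \<sigma> p" by (simp add: msup_def)
next
  fix p k assume "p \<in> positions d n" "k < d"
  then show "(\<Sum>j<n. msup d n \<sigma> (p[k := j])) = 1" using line_sum assms by blast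
qed

lemma msup_01: "msup d n \<sigma> p = 0 \<or> msup d n \<sigma> p = 1"
  by (simp add: msup_def)

lemma Omega1_le1:
  assumes A: "A \<in> Omega1 d n" and d: "d > 0" and p: "p \<in> positions d n"
  shows "A p \<le> 1"
proof -
  have s: "(\<Sum>j<n. A (p[0 := j])) = 1" using A p d by (simp add: Omega1_def)
  have lp: "length p = d" and sp: "set p \<subseteq> {..<n}" using p by (auto simp: positions_def)
  have p0: "p!0 < n" using sp lp d by (metis lessThan_iff nth_mem subsetD)
  have nn: "\<And>j. j \<in> {..<n} \<Longrightarrow> 0 \<le> A (p[0:=j])"
    using A upd_positions[OF p] by (simp add: Omega1_def)
  have "A (p[0 := p!0]) \<le> (\<Sum>j<n. A (p[0 := j]))"
    by (rule member_le_sum[OF _ nn]) (use p0 in auto)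
  then show ?thesis using s by simp
qed

lemma Omega1_nonneg:
  assumes A: "A \<in> Omega1 d n" shows "0 \<le> A p"
  using A by (cases "p \<in> positions d n") (auto simp: Omega1_def)

lemma zero_one_vertex:
  assumes A: "A \<in> Omega1 d n" and d: "d > 0" and z: "\<And>p. A p = 0 \<or> A p = 1"
  shows "A \<in> vertices d n"
  unfolding vertices_def
proof (intro CollectI conjI ballI allI impI)
  show "A \<in> Omega1 d n" by fact
next
  fix B C and t :: real
  assume B: "B \<in> Omega1 d n" and C: "C \<in> Omega1 d n" and h: "0 < t \<and> t < 1 \<and> A = (\<lambda>p. t * B p + (1 - t) * C p)"
  show "B = C"
  proof
    fix p
    show "B p = C p"
    proof (cases "p \<in> positions d n")
      case False then show ?thesis using B C by (simp add: Omega1_def)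
    next
      case True
      have b0: "0 \<le> B p" "B p \<le> 1" using B True d Omega1_nonneg Omega1_le1 by blast+
      have c0: "0 \<le> C p" "C p \<le> 1" using C True d Omega1_nonneg Omega1_le1 by blast+
      have ap: "A p = t * B p + (1 - t) * C p" using h by simp
      have t: "0 < t" "t < 1" using h by auto
      from z[of p] show ?thesis
      proof
        assume "A p = 0"
        then have "t * B p + (1 - t) * C p = 0" using ap by simp
        moreover have "0 \<le> t * B p" "0 \<le> (1 - t) * C p" using b0 c0 t by auto
        ultimately have "t * B p = 0" "(1 - t) * C p = 0" by linarith+
        then show ?thesis using t by simp
      next
        assume "A p = 1"
        then have e: "t * B p + (1 - t) * C p = 1" using ap by simp
        have "t * B p \<le> t" "(1 - t) * C p \<le> 1 - t" using b0 c0 t by (simp_all add: mult_left_le)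
        then have "t * B p = t" "(1 - t) * C p = 1 - t" using e by linarith+
        then show ?thesis using t by simp
      qed
    qed
  qed
qed

lemma hull_Omega1:
  assumes V: "V \<subseteq> Omega1 d n"
  shows "mat_hull V \<subseteq> Omega1 d n"
proof
  fix A assume "A \<in> mat_hull V"
  then obtain S w where S: "finite S" "S \<subseteq> V" "\<forall>x\<in>S. 0 \<le> w x" "sum w S = 1"
    and A: "A = (\<lambda>p. \<Sum>x\<in>S. w x * x p)" unfolding mat_hull_def by blast
  have xO: "\<And>x. x \<in> S \<Longrightarrow> x \<in> Omega1 d n" using S V by blast
  show "A \<in> Omega1 d n" unfolding Omega1_def
  proof (intro CollectI conjI ballI allI impI)
    fix p assume "p \<notin> positions d n"
    then show "A p = 0" unfolding A using xO by (auto simp: Omega1_def intro!: sum.neutral)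
  next
    fix p show "0 \<le> A p" unfolding A using xO S(3) Omega1_nonneg by (meson mult_nonneg_nonneg sum_nonneg)
  next
    fix p k assume p: "p \<in> positions d n" and k: "k < d"
    have "(\<Sum>j<n. A (p[k := j])) = (\<Sum>x\<in>S. w x * (\<Sum>j<n. x (p[k := j])))"
      unfolding A by (simp add: sum_distrib_left sum.swap[of _ "{..<n}"])
    also have "\<dots> = (\<Sum>x\<in>S. w x)"
      using xO p k by (intro sum.cong) (auto simp: Omega1_def)
    finally show "(\<Sum>j<n. A (p[k := j])) = 1" using S(4) by simp
  qed
qed

lemma hull_Zer1:
  assumes V: "V \<subseteq> Omega1 d n" and n: "n > 0"
    and df: "\<And>D. D \<in> diagonals d n \<Longrightarrow> \<exists>p\<in>D. \<forall>x\<in>V. x p = 0"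
  shows "mat_hull V \<subseteq> Zer1 d n"
proof
  fix A assume Ah: "A \<in> mat_hull V"
  then obtain S w where S: "finite S" "S \<subseteq> V"
    and A: "A = (\<lambda>p. \<Sum>x\<in>S. w x * x p)" unfolding mat_hull_def by blast
  have "per d n A = 0" unfolding per_def
  proof (rule sum.neutral, rule ballI)
    fix D assume D: "D \<in> diagonals d n"
    then have "card D = n" by (simp add: diagonals_def)
    then have fD: "finite D" using n card_ge_0_finite by auto
    obtain p where p: "p \<in> D" "\<forall>x\<in>V. x p = 0" using df[OF D] by blast
    have "A p = 0" unfolding A using p S(2) by (auto intro!: sum.neutral)
    then show "(\<Prod>p\<in>D. A p) = 0" using fD p(1) by (meson prod_zero)
  qed
  then show "A \<in> Zer1 d n" using hull_Omega1[OF V] Ah by (auto simp: Zer1_def)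
qed

lemma V_sub_hull: "V \<subseteq> mat_hull V"
proof
  fix x assume "x \<in> V"
  then show "x \<in> mat_hull V" unfolding mat_hull_def
    by (intro CollectI exI[of _ "{x}"] exI[of _ "\<lambda>_. 1"]) auto
qed

lemma aff_indep_private:
  assumes fin: "finite I" and i0: "i0 \<in> I"
    and priv: "\<And>i. i \<in> I \<Longrightarrow> i \<noteq> i0 \<Longrightarrow> \<exists>p. G i p \<noteq> 0 \<and> (\<forall>i'\<in>I. i' \<noteq> i \<longrightarrow> G i' p = 0)"
  shows "inj_on G I \<and> aff_indep (G ` I)"
proof
  show inj: "inj_on G I"
  proof (rule inj_onI)
    fix i i' assume ii: "i \<in> I" "i' \<in> I" "G i = G i'"
    show "i = i'"
    proof (rule ccontr)
      assume ne: "i \<noteq> i'"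
      show False
      proof (cases "i = i0")
        case True
        then have "i' \<noteq> i0" using ne by simp
        then obtain p where "G i' p \<noteq> 0" "\<forall>j\<in>I. j \<noteq> i' \<longrightarrow> G j p = 0" using priv ii by blast
        then show False using ii ne by metis
      next
        case False
        then obtain p where "G i p \<noteq> 0" "\<forall>j\<in>I. j \<noteq> i \<longrightarrow> G j p = 0" using priv ii by blast
        then show False using ii ne by metis
      qed
    qed
  qed
  show "aff_indep (G ` I)" unfolding aff_indep_def
  proof (intro allI impI)
    fix u :: "mat \<Rightarrow> real"
    assume h: "sum u (G ` I) = 0 \<and> (\<lambda>p. \<Sum>x\<in>G ` I. u x * x p) = (\<lambda>_. 0)"
    have z: "\<And>i. i \<in> I \<Longrightarrow> i \<noteq> i0 \<Longrightarrow> u (G i) = 0"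
    proof -
      fix i assume i: "i \<in> I" "i \<noteq> i0"
      obtain p where p: "G i p \<noteq> 0" "\<forall>j\<in>I. j \<noteq> i \<longrightarrow> G j p = 0" using priv i by blast
      have "(\<Sum>x\<in>G ` I. u x * x p) = 0" using h by metis
      also have "(\<Sum>x\<in>G ` I. u x * x p) = (\<Sum>j\<in>I. u (G j) * G j p)"
        by (rule sum.reindex[OF inj, unfolded comp_def])
      also have "\<dots> = u (G i) * G i p"
        using p i fin by (subst sum.remove[of _ i]) (auto intro!: sum.neutral)
      finally show "u (G i) = 0" using p by simp
    qed
    have "sum u (G ` I) = (\<Sum>j\<in>I. u (G j))" by (rule sum.reindex[OF inj, unfolded comp_def])
    also have "\<dots> = u (G i0)" using z i0 fin by (subst sum.remove[of _ i0]) (auto intro!: sum.neutral)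
    finally have "u (G i0) = 0" using h by simp
    then show "\<forall>x\<in>G ` I. u x = 0" using z by auto
  qed
qed

lemma diag_bij:
  assumes D: "D \<in> diagonals d n" and k: "k < d"
  shows "bij_betw (\<lambda>p. p!k) D {..<n}"
proof -
  have Dp: "D \<subseteq> positions d n" and cD: "card D = n"
    and dist: "\<forall>p\<in>D. \<forall>q\<in>D. p \<noteq> q \<longrightarrow> (\<forall>k<d. p ! k \<noteq> q ! k)"
    using D by (auto simp: diagonals_def)
  have inj: "inj_on (\<lambda>p. p!k) D" using dist k by (meson inj_onI)
  have sub: "(\<lambda>p. p!k) ` D \<subseteq> {..<n}"
  proof
    fix x assume "x \<in> (\<lambda>p. p!k) ` D"
    then obtain p where p: "p \<in> D" "x = p!k" by blast
    then have "length p = d" "set p \<subseteq> {..<n}" using Dp by (auto simp: positions_def)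
    then show "x \<in> {..<n}" using p k by (metis nth_mem subsetD)
  qed
  have "card ((\<lambda>p. p!k) ` D) = card {..<n}" using card_image[OF inj] cD by simp
  then have "(\<lambda>p. p!k) ` D = {..<n}" using card_subset_eq[OF _ sub] by simp
  then show ?thesis using inj by (simp add: bij_betw_def)
qed

lemma gauss_int: "(\<Sum>i<2*m. int i) = int m * (2 * int m - 1)"
proof (induction m)
  case 0 then show ?case by simp
next
  case (Suc m)
  have "{..<2 * Suc m} = insert (2*m+1) (insert (2*m) {..<2*m})" by auto
  then have "(\<Sum>i<2*Suc m. int i) = int (2*m+1) + int (2*m) + (\<Sum>i<2*m. int i)" by simp
  then show ?case using Suc by (simp add: algebra_simps)
qed

lemma diag_free:
  fixes e :: "nat list \<Rightarrow> int" and lo hi :: "nat \<Rightarrow> int"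
  assumes D: "D \<in> diagonals d n" and od: "odd d" and ev: "even n" and n: "n > 0"
    and b: "\<And>p. p \<in> D \<Longrightarrow> lo (p!0) \<le> e p \<and> e p \<le> hi (p!0) \<and> int (sum_list p) mod int n = e p mod int n"
    and hi: "2 * (\<Sum>i<n. hi i) < int n" and lo: "2 * (\<Sum>i<n. - lo i) < int n"
  shows False
proof -
  obtain m where m: "n = 2*m" using ev by blast
  have d0: "0 < d" using od by (cases d) auto
  have Dp: "D \<subseteq> positions d n" and cD: "card D = n" using D by (auto simp: diagonals_def)
  have fD: "finite D" using cD n card_ge_0_finite by auto
  have bj: "\<And>k. k < d \<Longrightarrow> bij_betw (\<lambda>p. p!k) D {..<n}" using diag_bij[OF D] by blast
  have "(\<Sum>p\<in>D. int (sum_list p)) = (\<Sum>p\<in>D. \<Sum>k<d. int (p!k))"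
  proof (rule sum.cong[OF refl])
    fix p assume "p \<in> D"
    then have "length p = d" using Dp by (auto simp: positions_def)
    then show "int (sum_list p) = (\<Sum>k<d. int (p!k))"
      by (simp add: sum_list_sum_nth atLeast0LessThan)
  qed
  also have "\<dots> = (\<Sum>k<d. \<Sum>p\<in>D. int (p!k))" by (rule sum.swap)
  also have "\<dots> = (\<Sum>k<d. \<Sum>i<n. int i)"
  proof (rule sum.cong[OF refl])
    fix k assume "k \<in> {..<d}"
    then show "(\<Sum>p\<in>D. int (p!k)) = (\<Sum>i<n. int i)"
      using sum.reindex_bij_betw[OF bj[of k], of int] by simp
  qed
  also have "\<dots> = int d * (int m * (2 * int m - 1))" using gauss_int m by simp
  finally have tot: "(\<Sum>p\<in>D. int (sum_list p)) = int d * (int m * (2 * int m - 1))" .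
  have "odd (int d * (2 * int m - 1))" using od by simp
  then obtain r where r: "int d * (2 * int m - 1) = 2 * r + 1" by (meson oddE)
  have "int d * (int m * (2 * int m - 1)) = int m * (int d * (2 * int m - 1))" by (simp add: algebra_simps)
  also have "\<dots> = int m * (2 * r + 1)" using r by simp
  also have "\<dots> = int n * r + int m" using m by (simp add: algebra_simps)
  finally have "int d * (int m * (2 * int m - 1)) = int n * r + int m" .
  then have tm: "(\<Sum>p\<in>D. int (sum_list p)) mod int n = int m" using tot m n by simp
  have "(\<Sum>p\<in>D. e p) mod int n = (\<Sum>p\<in>D. e p mod int n) mod int n" by (simp add: mod_sum_eq)
  also have "\<dots> = (\<Sum>p\<in>D. int (sum_list p) mod int n) mod int n"
    by (rule arg_cong[where f="\<lambda>x. x mod int n"], rule sum.cong[OF refl]) (use b in auto)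
  also have "\<dots> = int m" using tm by (simp add: mod_sum_eq)
  finally have em: "(\<Sum>p\<in>D. e p) mod int n = int m" .
  have "(\<Sum>p\<in>D. e p) \<le> (\<Sum>p\<in>D. hi (p!0))" using b by (intro sum_mono) auto
  also have "\<dots> = (\<Sum>i<n. hi i)" using sum.reindex_bij_betw[OF bj[OF d0], of hi] by simp
  finally have up: "2 * (\<Sum>p\<in>D. e p) < int n" using hi by linarith
  have "(\<Sum>p\<in>D. lo (p!0)) \<le> (\<Sum>p\<in>D. e p)" using b by (intro sum_mono) auto
  moreover have "(\<Sum>p\<in>D. lo (p!0)) = (\<Sum>i<n. lo i)" using sum.reindex_bij_betw[OF bj[OF d0], of lo] by simp
  moreover have "(\<Sum>i<n. - lo i) = - (\<Sum>i<n. lo i)" by (simp add: sum_negf)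
  ultimately have dn: "- int n < 2 * (\<Sum>p\<in>D. e p)" using lo by linarith
  define s where "s = (\<Sum>p\<in>D. e p)"
  have "s = int n * (s div int n) + int m" using em s_def by (metis div_mult_mod_eq add.commute mult.commute)
  define q where "q = s div int n"
  have sq: "s = int n * q + int m" using \<open>s = int n * (s div int n) + int m\<close> q_def by simp
  have up': "2 * s < int n" and dn': "- int n < 2 * s" using up dn s_def by auto
  show False
  proof (cases "q \<ge> 0")
    case True
    then have "0 \<le> int n * q" by simp
    then show False using sq up' m by linarith
  next
    case False
    then have "int n * q \<le> int n * (-1)" by (intro mult_left_mono) auto
    then show False using sq dn' m by linarith
  qed
qed

definition sw :: "nat \<Rightarrow> nat \<Rightarrow> nat \<Rightarrow> nat" where
  "sw a b x = (if x = a then b else if x = b then a else x)"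

lemma sw_lt: "a < n \<Longrightarrow> b < n \<Longrightarrow> x < n \<Longrightarrow> sw a b x < n"
  by (simp add: sw_def)

lemma sw_inj: "inj_on (sw a b) A"
  by (rule inj_onI) (auto simp: sw_def split: if_splits)

lemma negmod_inj:
  assumes "x < n" "y < n" "(- (int x + c)) mod int n = (- (int y + c)) mod int n"
  shows "x = y"
proof -
  have "(- (- (int x + c))) mod int n = (- (- (int y + c))) mod int n"
    using assms(3) by (metis mod_minus_cong)
  then have "(c + int x) mod int n = (c + int y) mod int n" by (simp add: add.commute)
  then show ?thesis using mod_nat_eq assms(1,2) by blast
qed

lemma mod_succ_ne:
  assumes "(1::int) < n" shows "a mod n \<noteq> (a + 1) mod n"
proof
  assume "a mod n = (a + 1) mod n"
  then have "n dvd (a + 1) - a" by (metis mod_eq_dvd_iff)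
  then have "n dvd 1" by simp
  then show False using assms using zdvd_imp_le[of n 1] by simp
qed

lemma latin_rowperm:
  assumes L: "latin n \<sigma>" and r: "\<And>i. i < n \<Longrightarrow> \<rho> i < n" and ri: "inj_on \<rho> {..<n}"
  shows "latin n (\<lambda>i j. \<sigma> (\<rho> i) j)"
  unfolding latin_def
proof (intro conjI allI impI)
  fix j assume j: "j < n"
  have "inj_on (\<lambda>i. \<sigma> i j mod int n) {..<n}" using L j by (simp add: latin_def)
  moreover have "\<rho> ` {..<n} \<subseteq> {..<n}" using r by auto
  ultimately have "inj_on ((\<lambda>i. \<sigma> i j mod int n) \<circ> \<rho>) {..<n}"
    using ri by (meson comp_inj_on inj_on_subset)
  then show "inj_on (\<lambda>i. \<sigma> (\<rho> i) j mod int n) {..<n}" by (simp add: comp_def)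
next
  fix i assume "i < n"
  then show "inj_on (\<lambda>j. \<sigma> (\<rho> i) j mod int n) {..<n}" using L r by (simp add: latin_def)
qed

lemma latin_colperm:
  assumes L: "latin n \<sigma>" and i: "i < n" and r: "\<And>j. j < n \<Longrightarrow> \<rho> j < n" and ri: "inj_on \<rho> {..<n}"
  shows "inj_on (\<lambda>j. \<sigma> i (\<rho> j) mod int n) {..<n}"
proof -
  have "inj_on (\<lambda>j. \<sigma> i j mod int n) {..<n}" using L i by (simp add: latin_def)
  moreover have "\<rho> ` {..<n} \<subseteq> {..<n}" using r by auto
  ultimately have "inj_on ((\<lambda>j. \<sigma> i j mod int n) \<circ> \<rho>) {..<n}"
    using ri by (meson comp_inj_on inj_on_subset)
  then show ?thesis by (simp add: comp_def)
qed

lemma latin_intercalate: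
  assumes L: "latin n \<sigma>" and lt: "a < n" "a' < n" "b < n" "b' < n" and ne: "a \<noteq> a'" "b \<noteq> b'"
    and e1: "\<sigma> a b mod int n = \<sigma> a' b' mod int n" and e2: "\<sigma> a b' mod int n = \<sigma> a' b mod int n"
  shows "latin n (\<lambda>i j. if i = a \<or> i = a' then \<sigma> i (sw b b' j) else \<sigma> i j)"
  unfolding latin_def
proof (intro conjI allI impI)
  fix i assume i: "i < n"
  show "inj_on (\<lambda>j. (if i = a \<or> i = a' then \<sigma> i (sw b b' j) else \<sigma> i j) mod int n) {..<n}"
  proof (cases "i = a \<or> i = a'")
    case True
    then show ?thesis using latin_colperm[OF L i, of "sw b b'"] sw_lt[OF lt(3,4)] sw_inj by simp
  next
    case False
    then show ?thesis using L i by (simp add: latin_def)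
  qed
next
  fix j assume j: "j < n"
  define \<rho> where "\<rho> = (if j = b \<or> j = b' then sw a a' else id)"
  have eq: "\<And>i. (if i = a \<or> i = a' then \<sigma> i (sw b b' j) else \<sigma> i j) mod int n = \<sigma> (\<rho> i) j mod int n"
    using e1 e2 ne by (auto simp: \<rho>_def sw_def)
  have "inj_on (\<lambda>i. \<sigma> (\<rho> i) j mod int n) {..<n}"
  proof -
    have "latin n (\<lambda>i j. \<sigma> (\<rho> i) j)"
      by (rule latin_rowperm[OF L]) (auto simp: \<rho>_def sw_lt lt sw_inj)
    then show ?thesis using j by (simp add: latin_def)
  qed
  then show "inj_on (\<lambda>i. (if i = a \<or> i = a' then \<sigma> i (sw b b' j) else \<sigma> i j) mod int n) {..<n}"
    unfolding eq .
qed

definition piT :: "nat \<Rightarrow> nat \<Rightarrow> nat" where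
  "piT T i = (if i < 3*T \<and> i mod 3 = 0 then i + 2 else if i < 3*T \<and> i mod 3 = 2 then i - 2 else i)"
lemma l3: "i < 3*T \<Longrightarrow> i mod 3 = 0 \<Longrightarrow> i + 2 < 3*(T::nat)"
  by presburger
lemma l4: "i mod 3 = 0 \<Longrightarrow> (i + 2) mod 3 = (2::nat)" by presburger
lemma l5: "i mod 3 = 2 \<Longrightarrow> (i - 2) mod 3 = (0::nat) \<and> i \<ge> 2" by presburger
lemma piT_lt: "i < 3*T \<Longrightarrow> piT T i < 3*T"
  unfolding piT_def using l3 by auto
lemma piT_invol: "piT T (piT T i) = i"
proof -
  consider "i < 3*T \<and> i mod 3 = 0" | "i < 3*T \<and> i mod 3 = 2" | "\<not> (i < 3*T \<and> i mod 3 = 0) \<and> \<not> (i < 3*T \<and> i mod 3 = 2)" by blast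
  then show ?thesis
  proof cases
    case 1 then show ?thesis using l3[of i T] l4[of i] by (simp add: piT_def)
  next
    case 2 then show ?thesis using l5[of i] by (auto simp: piT_def)
  next
    case 3 then have "piT T i = i" unfolding piT_def by auto
    then show ?thesis by simp
  qed
qed
lemma piT_inj: "inj_on (piT T) A"
  by (metis inj_onI piT_invol)

lemma piT_diff: "int (piT T i) - int i \<in> {-2, 0, 2}"
  unfolding piT_def by auto

lemma piT_even: "even (int (piT T i) - int i)"
proof -
  have "int (piT T i) - int i = -2 \<or> int (piT T i) - int i = 0 \<or> int (piT T i) - int i = 2"
    using piT_diff[of T i] by auto
  then show ?thesis by (metis even_minus even_numeral even_zero)
qed

lemma piT_ge: "\<not> i < 3*T \<Longrightarrow> piT T i = i"
  unfolding piT_def by simp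

lemma piT_0: "t < T \<Longrightarrow> piT T (3*t) = 3*t + 2"
  unfolding piT_def by simp

lemma piT_1: "piT T (3*t+1) = 3*t + 1"
  unfolding piT_def by simp

definition sigB :: "nat \<Rightarrow> nat \<Rightarrow> nat \<Rightarrow> int" where
  "sigB T i j = - (int (if odd j then piT T i else i) + int j)"

definition sigS :: "nat \<Rightarrow> nat \<Rightarrow> nat \<Rightarrow> nat \<Rightarrow> int" where
  "sigS n T i j = sigB T (sw (n-2) (n-1) i) j"

definition sigF :: "nat \<Rightarrow> nat \<Rightarrow> nat \<Rightarrow> nat \<Rightarrow> nat \<Rightarrow> int" where
  "sigF T t h i j = (if i = 3*t \<or> i = 3*t+1 then sigB T i (sw (2*h+1) (2*h+2) j) else sigB T i j)"

lemma sigB_e: "\<bar>sigB T i j + int i + int j\<bar> \<le> 2 \<and> (\<not> i < 3*T \<longrightarrow> sigB T i j + int i + int j = 0)"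
  using piT_diff[of T i] piT_ge[of i T] unfolding sigB_def by auto

locale gfam =
  fixes n T :: nat
  assumes ev: "even n" and n4: "4 \<le> n" and nT: "18*T + 2 < n"
begin

lemma T3: "3*T + 2 \<le> n" using nT by linarith

lemma piT_ltn: "i < n \<Longrightarrow> piT T i < n"
  using piT_lt[of i T] piT_ge[of i T] T3 by (cases "i < 3*T") auto

lemma latin_B: "latin n (sigB T)"
  unfolding latin_def
proof (intro conjI allI impI)
  fix j assume j: "j < n"
  show "inj_on (\<lambda>i. sigB T i j mod int n) {..<n}"
  proof (rule inj_onI)
    fix x y assume xy: "x \<in> {..<n}" "y \<in> {..<n}" "sigB T x j mod int n = sigB T y j mod int n"
    let ?f = "\<lambda>i. if odd j then piT T i else i"
    have "?f x < n" "?f y < n" using xy piT_ltn by auto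
    then have "?f x = ?f y" using negmod_inj[of "?f x" n "?f y" "int j"] xy(3) unfolding sigB_def by blast
    then show "x = y" using piT_inj[of T UNIV] by (auto split: if_splits dest: inj_onD)
  qed
next
  fix i assume i: "i < n"
  show "inj_on (\<lambda>j. sigB T i j mod int n) {..<n}"
  proof (rule inj_onI)
    fix x y assume xy: "x \<in> {..<n}" "y \<in> {..<n}" "sigB T i x mod int n = sigB T i y mod int n"
    define u where "u = (if odd x then piT T i else i)"
    define v where "v = (if odd y then piT T i else i)"
    have e: "(- (int u + int x)) mod int n = (- (int v + int y)) mod int n" using xy(3) unfolding sigB_def u_def v_def .
    show "x = y"
    proof (cases "odd x = odd y")
      case True
      then have "u = v" unfolding u_def v_def by simp
      then have "(- (int x + int u)) mod int n = (- (int y + int u)) mod int n" using e by (simp add: add.commute)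
      then show ?thesis using negmod_inj xy by auto
    next
      case False
      have "(- (- (int u + int x))) mod int n = (- (- (int v + int y))) mod int n"
        using e by (metis mod_minus_cong)
      then have "int n dvd (int u + int x) - (int v + int y)" by (simp add: mod_eq_dvd_iff add.commute)
      then have "even ((int u + int x) - (int v + int y))" using ev by (meson dvd_trans even_of_nat_iff)
      moreover have "even (int u - int v)"
      proof (cases "odd x")
        case True
        then have "u = piT T i" "v = i" using False unfolding u_def v_def by auto
        then show ?thesis using piT_even[of T i] by simp
      next
        case F: False
        then have "v = piT T i" "u = i" using False unfolding u_def v_def by auto
        moreover have "int i - int (piT T i) = - (int (piT T i) - int i)" by simp
        ultimately show ?thesis using piT_even[of T i] by (metis even_minus)
      qed
      moreover have "odd (int x - int y)" using False by auto
      moreover have "(int u + int x) - (int v + int y) = (int u - int v) + (int x - int y)" by simp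
      ultimately show ?thesis by (metis even_add)
    qed
  qed
qed

end

context gfam
begin

lemma latin_S: "latin n (sigS n T)"
  unfolding sigS_def
  by (rule latin_rowperm[OF latin_B]) (use n4 in \<open>auto simp: sw_lt sw_inj\<close>)

lemma latin_F:
  assumes t: "t < T" and h: "2*h+2 < n"
  shows "latin n (sigF T t h)"
proof -
  have a: "3*t+1 < n" using t T3 by linarith
  have "latin n (\<lambda>i j. if i = 3*t \<or> i = 3*t+1 then sigB T i (sw (2*h+1) (2*h+2) j) else sigB T i j)"
  proof (rule latin_intercalate[OF latin_B])
    show "sigB T (3*t) (2*h+1) mod int n = sigB T (3*t+1) (2*h+2) mod int n"
      using piT_0[OF t] piT_1[of T t] by (simp add: sigB_def)
    show "sigB T (3*t) (2*h+2) mod int n = sigB T (3*t+1) (2*h+1) mod int n"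
      using piT_1[of T t] by (simp add: sigB_def algebra_simps)
  qed (use a h in auto)
  then show ?thesis unfolding sigF_def[abs_def] by simp
qed

lemma sigS_e:
  assumes i: "i < n"
  shows "(i = n-2 \<longrightarrow> sigS n T i j + int i + int j = -1) \<and> (i = n-1 \<longrightarrow> sigS n T i j + int i + int j = 1)
     \<and> (i \<noteq> n-2 \<and> i \<noteq> n-1 \<longrightarrow> sigS n T i j = sigB T i j)"
proof -
  have g1: "\<not> n-1 < 3*T" "\<not> n-2 < 3*T" using T3 by auto
  have "sigB T (n-1) j + int (n-1) + int j = 0" "sigB T (n-2) j + int (n-2) + int j = 0"
    using sigB_e[of T "n-1" j] sigB_e[of T "n-2" j] g1 by auto
  moreover have "int (n-1) = int (n-2) + 1" using n4 by simp
  ultimately show ?thesis unfolding sigS_def sw_def using n4 by auto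
qed

lemma sigF_e:
  assumes t: "t < T"
  shows "\<bar>sigF T t h i j + int i + int j\<bar> \<le> 3 \<and> (\<not> i < 3*T \<longrightarrow> sigF T t h i j = sigB T i j)"
proof (cases "i = 3*t \<or> i = 3*t+1")
  case True
  let ?j = "sw (2*h+1) (2*h+2) j"
  have "\<bar>int j - int ?j\<bar> \<le> 1" unfolding sw_def by auto
  moreover have "\<bar>sigB T i ?j + int i + int ?j\<bar> \<le> 2" using sigB_e by blast
  ultimately have "\<bar>sigB T i ?j + int i + int j\<bar> \<le> 3" by linarith
  moreover have "i < 3*T" using True t by linarith
  ultimately show ?thesis using True unfolding sigF_def by simp
next
  case False
  then show ?thesis using sigB_e[of T i j] unfolding sigF_def by auto
qed

definition m1 :: nat where "m1 = n div 2 - 1"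

definition sig :: "nat \<times> nat \<Rightarrow> nat \<Rightarrow> nat \<Rightarrow> int" where
  "sig ix = (if fst ix < T then sigF T (fst ix) (snd ix) else if fst ix = T then sigB T else sigS n T)"

definition Idx :: "(nat \<times> nat) set" where
  "Idx = {..<T} \<times> {..<m1} \<union> {(T,0), (T+1,0)}"

definition lo :: "nat \<Rightarrow> int" where
  "lo i = (if i < 3*T then -3 else 0) + (if i = n-2 then -1 else 0)"

definition hi :: "nat \<Rightarrow> int" where
  "hi i = (if i < 3*T then 3 else 0) + (if i = n-1 then 1 else 0)"

lemma Idx_fin: "finite Idx" unfolding Idx_def by simp

lemma Idx_card: "card Idx = T * m1 + 2"
proof -
  have d: "({..<T} \<times> {..<m1}) \<inter> {(T,0), (T+1,0)} = {}" by auto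
  have "card Idx = card ({..<T} \<times> {..<m1}) + card {(T,0), (T+1,0::nat)}"
    unfolding Idx_def by (rule card_Un_disjoint) (use d in auto)
  then show ?thesis by (simp add: card_cartesian_product)
qed

lemma m1_bound: "h < m1 \<Longrightarrow> 2*h+2 < n"
  unfolding m1_def using ev n4 by (elim evenE) auto

lemma sig_latin: "ix \<in> Idx \<Longrightarrow> latin n (sig ix)"
  unfolding Idx_def sig_def using latin_F latin_B latin_S m1_bound by auto

lemma sig_e:
  assumes ix: "ix \<in> Idx" and i: "i < n"
  shows "lo i \<le> sig ix i j + int i + int j \<and> sig ix i j + int i + int j \<le> hi i"
proof -
  have g: "\<not> n-1 < 3*T" "\<not> n-2 < 3*T" "n - 2 \<noteq> n - 1" using T3 n4 by auto
  have Bb: "\<bar>sigB T i j + int i + int j\<bar> \<le> 2" and Bz: "\<not> i < 3*T \<Longrightarrow> sigB T i j + int i + int j = 0"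
    using sigB_e[of T i j] by auto
  have lh1: "i < 3*T \<Longrightarrow> lo i = -3 \<and> hi i = 3" using g unfolding lo_def hi_def by auto
  have lh2: "\<not> i < 3*T \<Longrightarrow> lo i \<le> 0 \<and> 0 \<le> hi i" unfolding lo_def hi_def by auto
  have B: "lo i \<le> sigB T i j + int i + int j \<and> sigB T i j + int i + int j \<le> hi i"
  proof (cases "i < 3*T")
    case True
    then show ?thesis using lh1 Bb by linarith
  next
    case False
    then show ?thesis using lh2 Bz by linarith
  qed
  consider (F) "fst ix < T" | (B) "fst ix = T" | (S) "fst ix \<noteq> T" "\<not> fst ix < T" by linarith
  then show ?thesis
  proof cases
    case F
    have sF: "sig ix = sigF T (fst ix) (snd ix)" using F unfolding sig_def by simp
    have Fe: "\<bar>sigF T (fst ix) (snd ix) i j + int i + int j\<bar> \<le> 3"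
      "\<not> i < 3*T \<Longrightarrow> sigF T (fst ix) (snd ix) i j = sigB T i j" using sigF_e[OF F] by auto
    show ?thesis
    proof (cases "i < 3*T")
      case True
      then show ?thesis unfolding sF using lh1 Fe(1) by linarith
    next
      case False
      then show ?thesis unfolding sF using Fe(2) B by simp
    qed
  next
    case B then show ?thesis using \<open>lo i \<le> _ \<and> _\<close> unfolding sig_def by simp
  next
    case S
    have sS: "sig ix = sigS n T" using S unfolding sig_def by simp
    have "lo (n-2) = -1" "hi (n-2) = 0" "lo (n-1) = 0" "hi (n-1) = 1" using g unfolding lo_def hi_def by auto
    moreover note e = sigS_e[OF i, of j]
    ultimately show ?thesis unfolding sS using B
      by (cases "i = n-2"; cases "i = n-1") auto
  qed
qed

lemma hi_sum: "2 * (\<Sum>i<n. hi i) < int n"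
proof -
  have a: "(\<Sum>i<n. (if i < 3*T then 3 else 0::int)) = (\<Sum>i\<in>{..<n} \<inter> {i. i < 3*T}. 3)"
    by (subst sum.inter_restrict) simp_all
  have b: "{..<n} \<inter> {i. i < 3*T} = {..<3*T}" using T3 by auto
  have c: "(\<Sum>i<n. (if i = n-1 then 1 else 0::int)) = 1" using n4 by (subst sum.delta) auto
  have "(\<Sum>i<n. hi i) = 9 * int T + 1" unfolding hi_def sum.distrib a b c by simp
  then show ?thesis using nT by linarith
qed

lemma lo_sum: "2 * (\<Sum>i<n. - lo i) < int n"
proof -
  have a: "(\<Sum>i<n. (if i < 3*T then 3 else 0::int)) = (\<Sum>i\<in>{..<n} \<inter> {i. i < 3*T}. 3)"
    by (subst sum.inter_restrict) simp_all
  have b: "{..<n} \<inter> {i. i < 3*T} = {..<3*T}" using T3 by auto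
  have c: "(\<Sum>i<n. (if i = n-2 then 1 else 0::int)) = 1" using n4 by (subst sum.delta) auto
  have e: "\<And>i. - lo i = (if i < 3*T then 3 else 0) + (if i = n-2 then 1 else 0)" unfolding lo_def by simp
  have "(\<Sum>i<n. - lo i) = 9 * int T + 1" unfolding e sum.distrib a b c by simp
  then show ?thesis using nT by linarith
qed

end

lemma sum_list_split2: "2 \<le> length p \<Longrightarrow> sum_list p = p!0 + p!1 + sum_list (drop 2 p)"
  by (cases p; cases "tl p") (auto simp: add.assoc)

lemma priv_pos:
  fixes \<tau> :: int
  assumes d: "3 \<le> d" and i: "i < n" and j: "j < n"
  defines "p \<equiv> [i, j, nat (\<tau> mod int n)] @ replicate (d-3) 0"
  shows "p \<in> positions d n \<and> msup d n \<sigma> p = (if \<sigma> i j mod int n = \<tau> mod int n then 1 else 0)"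
proof -
  have n: "0 < n" using i by simp
  have s: "nat (\<tau> mod int n) < n" using n by (simp add: nat_less_iff)
  have "length p = d" using d unfolding p_def by simp
  moreover have "set p \<subseteq> {..<n}" using i j s n unfolding p_def by auto
  ultimately have pp: "p \<in> positions d n" by (simp add: positions_def)
  have "drop 2 p = nat (\<tau> mod int n) # replicate (d-3) 0" unfolding p_def by simp
  then have "int (sum_list (drop 2 p)) = \<tau> mod int n" using n by simp
  moreover have "p!0 = i" "p!1 = j" unfolding p_def by auto
  ultimately show ?thesis using pp unfolding msup_def by auto
qed

context gfam
begin

lemma row_n2: "t < T \<Longrightarrow> n - 2 \<noteq> 3*t \<and> n - 2 \<noteq> 3*t+1"
  using T3 by linarith

lemma sig_other_rowS: "ix \<in> Idx \<Longrightarrow> fst ix \<noteq> T+1 \<Longrightarrow> sig ix (n-2) j = sigB T (n-2) j"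
  unfolding Idx_def sig_def sigF_def using row_n2 by auto

lemma sig_priv:
  assumes ix: "ix \<in> Idx" "ix \<noteq> (T,0)"
  shows "\<exists>i<n. \<exists>j<n. \<forall>ix'\<in>Idx. ix' \<noteq> ix \<longrightarrow> sig ix' i j mod int n \<noteq> sig ix i j mod int n"
proof (cases "fst ix < T")
  case False
  then have ixS: "ix = (T+1, 0)" using ix unfolding Idx_def by auto
  have g: "\<not> n-1 < 3*T" "\<not> n-2 < 3*T" using T3 by auto
  have vS: "sig ix (n-2) 0 = - int (n-1)" using ixS g n4 unfolding sig_def sigS_def sigB_def sw_def
    by (simp add: piT_ge)
  have vB: "sigB T (n-2) 0 = - int (n-2)" unfolding sigB_def by simp
  have "- int (n-1) + 1 = - int (n-2)" using n4 by simp
  then have ne: "(- int (n-1)) mod int n \<noteq> (- int (n-2)) mod int n" using mod_succ_ne[of "int n" "- int (n-1)"] n4 by simp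
  have all: "\<forall>ix'\<in>Idx. ix' \<noteq> ix \<longrightarrow> sig ix' (n-2) 0 mod int n \<noteq> sig ix (n-2) 0 mod int n"
  proof (intro ballI impI)
    fix ix' assume ix': "ix' \<in> Idx" "ix' \<noteq> ix"
    then have "fst ix' \<noteq> T+1" using ixS unfolding Idx_def by auto
    then have "sig ix' (n-2) 0 = sigB T (n-2) 0" using sig_other_rowS ix' by blast
    then show "sig ix' (n-2) 0 mod int n \<noteq> sig ix (n-2) 0 mod int n" using vS vB ne by metis
  qed
  have "n - 2 < n" "0 < n" using n4 by auto
  then show ?thesis using all by blast
next
  case True
  obtain t h where th: "ix = (t,h)" by fastforce
  have t: "t < T" and h: "h < m1" using True ix th unfolding Idx_def by auto
  have hn: "2*h+2 < n" using m1_bound[OF h] .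
  have tn: "3*t < n" using t T3 by linarith
  have v: "sig ix (3*t) (2*h+1) = - int (3*t + 2*h + 2)"
    using th t unfolding sig_def sigF_def sigB_def sw_def by simp
  have vB: "sigB T (3*t) (2*h+1) = - int (3*t + 2*h + 2) - 1"
    using piT_0[OF t] unfolding sigB_def by simp
  have ne: "(- int (3*t + 2*h + 2) - 1) mod int n \<noteq> (- int (3*t + 2*h + 2)) mod int n"
    using mod_succ_ne[of "int n" "- int (3*t + 2*h + 2) - 1"] n4 by simp
  have all: "\<forall>ix'\<in>Idx. ix' \<noteq> ix \<longrightarrow> sig ix' (3*t) (2*h+1) mod int n \<noteq> sig ix (3*t) (2*h+1) mod int n"
  proof (intro ballI impI)
    fix ix' assume ix': "ix' \<in> Idx" "ix' \<noteq> ix"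
    have "sig ix' (3*t) (2*h+1) = sigB T (3*t) (2*h+1)"
    proof (cases "fst ix' < T")
      case True
      obtain t' h' where th': "ix' = (t',h')" by fastforce
      show ?thesis
      proof (cases "t' = t")
        case True
        then have "h' \<noteq> h" using ix' th th' by auto
        then have "sw (2*h'+1) (2*h'+2) (2*h+1) = 2*h+1" unfolding sw_def by presburger
        then show ?thesis using True th' t unfolding sig_def sigF_def by simp
      next
        case False
        then have "3*t \<noteq> 3*t' \<and> 3*t \<noteq> 3*t'+1" by presburger
        then show ?thesis using th' \<open>fst ix' < T\<close> unfolding sig_def sigF_def by simp
      qed
    next
      case False
      then have "ix' = (T,0) \<or> ix' = (T+1,0)" using ix' unfolding Idx_def by auto
      moreover have "sw (n-2) (n-1) (3*t) = 3*t" using t T3 unfolding sw_def by auto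
      ultimately show ?thesis unfolding sig_def sigS_def by auto
    qed
    then show "sig ix' (3*t) (2*h+1) mod int n \<noteq> sig ix (3*t) (2*h+1) mod int n"
      using v vB ne by simp
  qed
  have "2*h+1 < n" using hn by linarith
  then show ?thesis using all tn by blast
qed

definition Gm :: "nat \<Rightarrow> nat \<times> nat \<Rightarrow> mat" where
  "Gm d ix = msup d n (sig ix)"

lemma Gm_priv:
  assumes d: "3 \<le> d" and ix: "ix \<in> Idx" "ix \<noteq> (T,0)"
  shows "\<exists>p. Gm d ix p \<noteq> 0 \<and> (\<forall>ix'\<in>Idx. ix' \<noteq> ix \<longrightarrow> Gm d ix' p = 0)"
proof -
  obtain i j where ij: "i < n" "j < n" "\<forall>ix'\<in>Idx. ix' \<noteq> ix \<longrightarrow> sig ix' i j mod int n \<noteq> sig ix i j mod int n"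
    using sig_priv[OF ix] by blast
  define p where "p = [i, j, nat (sig ix i j mod int n)] @ replicate (d-3) 0"
  have "\<And>\<sigma>. msup d n \<sigma> p = (if \<sigma> i j mod int n = sig ix i j mod int n then 1 else 0)"
    using priv_pos[OF d ij(1,2)] unfolding p_def by blast
  then show ?thesis using ij(3) unfolding Gm_def by (intro exI[of _ p]) auto
qed

lemma Gm_free:
  assumes d: "3 \<le> d" "odd d" and D: "D \<in> diagonals d n"
  shows "\<exists>p\<in>D. \<forall>x\<in>Gm d ` Idx. x p = 0"
proof (rule ccontr)
  assume "\<not> ?thesis"
  then have ex: "\<forall>p\<in>D. \<exists>ix\<in>Idx. Gm d ix p \<noteq> 0" by auto
  define ch where "ch p = (SOME ix. ix \<in> Idx \<and> Gm d ix p \<noteq> 0)" for p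
  have ch: "\<And>p. p \<in> D \<Longrightarrow> ch p \<in> Idx \<and> Gm d (ch p) p \<noteq> 0"
    unfolding ch_def using ex by (metis (mono_tags, lifting) someI_ex)
  define e where "e p = sig (ch p) (p!0) (p!1) + int (p!0) + int (p!1)" for p
  show False
  proof (rule diag_free[OF D d(2) ev _ _ hi_sum lo_sum])
    show "0 < n" using n4 by simp
    fix p assume p: "p \<in> D"
    have pp: "p \<in> positions d n" and md: "int (sum_list (drop 2 p)) mod int n = sig (ch p) (p!0) (p!1) mod int n"
      using ch[OF p] unfolding Gm_def msup_def by (auto split: if_splits)
    have lp: "length p = d" and sp: "set p \<subseteq> {..<n}" using pp by (auto simp: positions_def)
    have "0 < length p" "1 < length p" using lp d by auto
    then have "p!0 \<in> set p" "p!1 \<in> set p" by (auto intro: nth_mem)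
    then have p0: "p!0 < n" and p1: "p!1 < n" using sp by auto
    have sl: "int (sum_list p) = int (p!0) + int (p!1) + int (sum_list (drop 2 p))"
      using sum_list_split2[of p] lp d by simp
    have "int (sum_list p) mod int n = (int (p!0) + int (p!1) + sig (ch p) (p!0) (p!1)) mod int n"
      unfolding sl using md by (metis mod_add_right_eq)
    then have "int (sum_list p) mod int n = e p mod int n" unfolding e_def by (simp add: algebra_simps)
    moreover have "lo (p!0) \<le> e p \<and> e p \<le> hi (p!0)" using sig_e[OF conjunct1[OF ch[OF p]] p0] unfolding e_def by simp
    ultimately show "lo (p!0) \<le> e p \<and> e p \<le> hi (p!0) \<and> int (sum_list p) mod int n = e p mod int n" by simp
  qed
qed

end

lemma count_ineq:
  fixes n :: nat
  assumes ev: "even n" and n4: "4 \<le> n"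
  shows "(1/2000) * real n powr (3/2) + 1 \<le> real (((n-3) div 18) * (n div 2 - 1) + 2)"
proof -
  define T where "T = (n-3) div 18"
  define m1 where "m1 = n div 2 - 1"
  have p: "real n powr (3/2) \<le> real n powr 2" using n4 by (intro powr_mono) auto
  have p2: "real n powr 2 = real n ^ 2" using n4 by (simp add: powr_realpow)
  have key: "n^2 \<le> 2000 * (T * m1 + 1)"
  proof (cases "n \<le> 44")
    case True
    then have "n^2 \<le> 44^2" using power_mono[of n 44 2] by simp
    then show ?thesis by simp
  next
    case False
    have a: "n - 20 \<le> 18 * T" unfolding T_def by linarith
    have b: "n - 2 = 2 * m1" unfolding m1_def using ev n4 by (elim evenE) auto
    have "(n - 20) * (n - 2) \<le> (18 * T) * (2 * m1)" using a b by (intro mult_mono) auto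
    also have "(18 * T) * (2 * m1) = 36 * T * m1" by simp
    finally have c0: "(n - 20) * (n - 2) \<le> 36 * T * m1" .
    have "int ((n - 20) * (n - 2)) \<le> int (36 * T * m1)" using c0 by (simp only: of_nat_le_iff)
    then have c: "int (n - 20) * int (n - 2) \<le> 36 * int T * int m1" by (simp only: of_nat_mult of_nat_numeral)
    have "int (n-20) = int n - 20" "int (n-2) = int n - 2" using False by auto
    then have "(int n - 20) * (int n - 2) \<le> 36 * int T * int m1" using c by simp
    then have c': "int n * int n - 22 * int n + 40 \<le> 36 * (int T * int m1)" by (simp add: algebra_simps)
    have "45 \<le> int n" using False by simp
    then have h: "45 * int n \<le> int n * int n" by (intro mult_right_mono) auto
    have nn: "0 \<le> int n" by simp
    define Q where "Q = int n * int n"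
    define X where "X = int T * int m1"
    have "Q \<le> 2000 * (X + 1)" using c' h nn unfolding Q_def[symmetric] X_def[symmetric] by (simp add: algebra_simps)
    then have "int n * int n \<le> 2000 * (int T * int m1 + 1)" unfolding Q_def X_def .
    then have "int (n^2) \<le> 2000 * (int T * int m1 + 1)" by (simp add: power2_eq_square)
    then have "int (n^2) \<le> int (2000 * (T * m1 + 1))" by simp
    then show ?thesis by (simp only: of_nat_le_iff)
  qed
  have "real n powr (3/2) \<le> real (n^2)" using p p2 by simp
  also have "\<dots> \<le> 2000 * real (T * m1 + 1)" using key by (metis of_nat_le_iff of_nat_mult of_nat_numeral)
  finally show ?thesis unfolding T_def[symmetric] m1_def[symmetric] by simp
qed

theorem corollary2p7:
  shows "\<exists>c::real. c > 0 \<and> (\<forall>n d :: nat. even n \<and> n > 2 \<and> odd d \<and> d > 1 \<longrightarrow>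
     (\<exists>V. V \<subseteq> vertices d n \<and> mat_hull V \<subseteq> Zer1 d n
          \<and> aff_dim_ge (mat_hull V) (c * real n powr (3/2))))"
proof (intro exI[of _ "1/2000"] conjI allI impI)
  show "(0::real) < 1/2000" by simp
  fix n d :: nat
  assume h: "even n \<and> n > 2 \<and> odd d \<and> d > 1"
  have ev: "even n" and od: "odd d" using h by auto
  have n4: "4 \<le> n" using h by (auto elim!: evenE)
  have d3: "3 \<le> d" using h by (auto elim!: oddE)
  define T where "T = (n-3) div 18"
  have nT: "18*T + 2 < n" unfolding T_def using n4 by linarith
  interpret G: gfam n T using ev n4 nT by (rule gfam.intro)
  define V where "V = G.Gm d ` G.Idx"
  have VO: "V \<subseteq> Omega1 d n"
  proof
    fix x assume "x \<in> V"
    then obtain ix where ix: "ix \<in> G.Idx" "x = G.Gm d ix" unfolding V_def by blast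
    have "latin n (G.sig ix)" using G.sig_latin[OF ix(1)] .
    then have "msup d n (G.sig ix) \<in> Omega1 d n" using msup_Omega1[of n "G.sig ix" d] n4 d3 by simp
    then show "x \<in> Omega1 d n" unfolding ix(2) G.Gm_def .
  qed
  have "V \<subseteq> vertices d n"
  proof
    fix x assume "x \<in> V"
    then obtain ix where ix: "ix \<in> G.Idx" "x = G.Gm d ix" unfolding V_def by blast
    have "\<And>p. x p = 0 \<or> x p = 1" unfolding ix(2) G.Gm_def by (rule msup_01)
    moreover have "x \<in> Omega1 d n" using VO \<open>x \<in> V\<close> by blast
    ultimately show "x \<in> vertices d n" using zero_one_vertex[of x d n] d3 by simp
  qed
  moreover have "mat_hull V \<subseteq> Zer1 d n"
  proof (rule hull_Zer1[OF VO])
    show "0 < n" using n4 by simp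
    fix D assume "D \<in> diagonals d n"
    then show "\<exists>p\<in>D. \<forall>x\<in>V. x p = 0" using G.Gm_free[OF d3 od] unfolding V_def by blast
  qed
  moreover have "aff_dim_ge (mat_hull V) (1/2000 * real n powr (3/2))"
    unfolding aff_dim_ge_def
  proof (intro exI[of _ V] conjI)
    show "V \<subseteq> mat_hull V" by (rule V_sub_hull)
    show "finite V" unfolding V_def using G.Idx_fin by simp
    have i0: "(T,0) \<in> G.Idx" unfolding G.Idx_def by simp
    have ai: "inj_on (G.Gm d) G.Idx \<and> aff_indep (G.Gm d ` G.Idx)"
      by (rule aff_indep_private[OF G.Idx_fin i0]) (use G.Gm_priv[OF d3] in blast)
    then show "aff_indep V" unfolding V_def by simp
    have "card V = T * G.m1 + 2" unfolding V_def using ai card_image G.Idx_card by metis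
    then show "1/2000 * real n powr (3/2) + 1 \<le> real (card V)"
      using count_ineq[OF ev n4] unfolding T_def G.m1_def by simp
  qed
  ultimately show "\<exists>V. V \<subseteq> vertices d n \<and> mat_hull V \<subseteq> Zer1 d n \<and> aff_dim_ge (mat_hull V) (1/2000 * real n powr (3/2))"
    by blast
qed

end
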